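(* Local dominance improvement dynamics for multiple issues need not converge, even if all issues are binary and all agents use the $\ell_\infty$ distance with the same constant uncertainty parameters. One instance: - $p=2$ binary issues, $n=13$ agents, and $(r^1_j,r^2_j)=(1,2)$ for every agent $j$ in every round. - Three agents have ranking $(0,1)\succ(1,1)\succ(1,0)\succ(0,0)$. - Five agents have ranking $(0,0)\succ(0,1)\succ(1,1)\succ(1,0)$. - Four agents have ranking $(1,0)\succ(1,1)\succ(0,0)\succ(0,1)$. - One agent has ranking $(1,1)\succ(1,0)\succ(0,1)\succ(0,0)$. In this instance there is an infinite (cyclic) sequence of LDI steps starting from the truthful vote profile.
   Context: Issues $\mathcal P=\{1,\dots,p\}$ with finite candidate sets $D_i$; binary means $D_i=\{0,1\}$. There are $n$ agents with strict rankings $\succ_j$ over $\mathcal D=\prod_iD_i$, and vote profiles $a\in\mathcal D^n$. The truthful profile has each agent voting for their top alternative. Score tuples and outcomes: - For a score tuple $v=(v^i)_i$ with $v^i\in\mathbb N^{D_i}$, the plurality outcome $f(v)$ picks on each issue the top-scoring candidate, with ties broken lexicographically ($0$ before $1$). - $v+b$ adds one vote for $b^i$ on each issue $i$. - $s_{-j}(a)$ is the score tuple of $a$ without agent $j$. Uncertainty with the $\ell_\infty$ distance and parameters $r_j=(r_j^i)_i$: $$\tilde S_{-j}(a;r_j)=\prod_i\{v^i\in\mathbb N^{D_i}:\max_{c}|v^i(c)-s^i_{-j}(c;a)|\le r^i_j\}.$$ Local dominance: $\hat a_j$ $S$-beats $a_j$ if some $v\in S$ has $f(v+\hat a_j)\succ_j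 f(v+a_j)$. The vote $\hat a_j$ $S$-dominates $a_j$ if it $S$-beats $a_j$ and $a_j$ does not $S$-beat $\hat a_j$. An LDI step of $j$ on issue $i$ at $a$ (with $S=\tilde S_{-j}(a;r_j)$) is a change to a vote that satisfies all of the following: - it $S$-dominates $a_j$; - it differs from $a_j$ only on issue $i$; - it is not $S$-dominated by another vote differing from $a_j$ only on issue $i$. Dynamics: at each round a scheduler selects one agent and one issue on which the agent has an LDI step, and that agent makes it. Convergence means every such sequence is finite from every initial profile. *)

theory Defs
  imports Main
begin

text \<open>Issues are indexed 0..p-1 (issue i of the paper is index i-1).
  D i is the finite candidate set of issue i (candidates are natural numbers; ties are
  broken towards the smallest candidate, i.e. 0 before 1).  A score tuple is a function v :: issue => candidate => nat,
  with v i c = 0 for c outside D i (so v^i is an element of N^{D_i}).\<close>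

type_synonym alt = "nat list"
type_synonym profile = "nat \<Rightarrow> alt"
type_synonym scores = "nat \<Rightarrow> nat \<Rightarrow> nat"

definition is_alt :: "(nat \<Rightarrow> nat set) \<Rightarrow> nat \<Rightarrow> alt \<Rightarrow> bool" where
  "is_alt D p x \<longleftrightarrow> length x = p \<and> (\<forall>i<p. x ! i \<in> D i)"

definition rank_pref :: "alt list \<Rightarrow> alt \<Rightarrow> alt \<Rightarrow> bool" where
  "rank_pref L x y \<longleftrightarrow> (\<exists>k l. k < l \<and> l < length L \<and> L ! k = x \<and> L ! l = y)"

definition plurality :: "(nat \<Rightarrow> nat set) \<Rightarrow> nat \<Rightarrow> scores \<Rightarrow> alt" where
  "plurality D p v = map (\<lambda>i. LEAST c. c \<in> D i \<and> (\<forall>c'\<in>D i. v i c' \<le> v i c)) [0..<p]"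

definition add_vote :: "scores \<Rightarrow> alt \<Rightarrow> scores" where
  "add_vote v b = (\<lambda>i c. v i c + (if i < length b \<and> c = b ! i then 1 else 0))"

definition score_minus :: "nat \<Rightarrow> profile \<Rightarrow> nat \<Rightarrow> nat \<Rightarrow> nat \<Rightarrow> nat" where
  "score_minus n a j i c = card {k. k < n \<and> k \<noteq> j \<and> a k ! i = c}"

definition unc_set :: "(nat \<Rightarrow> nat set) \<Rightarrow> nat \<Rightarrow> nat \<Rightarrow> profile \<Rightarrow> nat \<Rightarrow> (nat \<Rightarrow> nat) \<Rightarrow> scores set" where
  "unc_set D p n a j r =
     {v. (\<forall>i c. (i \<ge> p \<or> c \<notin> D i) \<longrightarrow> v i c = 0) \<and>
         (\<forall>i<p. \<forall>c\<in>D i. \<bar>int (v i c) - int (score_minus n a j i c)\<bar> \<le> int (r i))}"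

definition S_beats :: "(nat \<Rightarrow> nat set) \<Rightarrow> nat \<Rightarrow> (alt \<Rightarrow> alt \<Rightarrow> bool) \<Rightarrow> scores set \<Rightarrow> alt \<Rightarrow> alt \<Rightarrow> bool" where
  "S_beats D p pref S b a \<longleftrightarrow> (\<exists>v\<in>S. pref (plurality D p (add_vote v b)) (plurality D p (add_vote v a)))"

definition S_dominates :: "(nat \<Rightarrow> nat set) \<Rightarrow> nat \<Rightarrow> (alt \<Rightarrow> alt \<Rightarrow> bool) \<Rightarrow> scores set \<Rightarrow> alt \<Rightarrow> alt \<Rightarrow> bool" where
  "S_dominates D p pref S b a \<longleftrightarrow> S_beats D p pref S b a \<and> \<not> S_beats D p pref S a b"

definition differs_only_on :: "nat \<Rightarrow> nat \<Rightarrow> alt \<Rightarrow> alt \<Rightarrow> bool" where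
  "differs_only_on p i b a \<longleftrightarrow> (\<forall>k<p. k \<noteq> i \<longrightarrow> b ! k = a ! k)"

definition LDI_step :: "(nat \<Rightarrow> nat set) \<Rightarrow> nat \<Rightarrow> nat \<Rightarrow> (nat \<Rightarrow> alt \<Rightarrow> alt \<Rightarrow> bool)
     \<Rightarrow> (nat \<Rightarrow> nat \<Rightarrow> nat) \<Rightarrow> profile \<Rightarrow> nat \<Rightarrow> nat \<Rightarrow> alt \<Rightarrow> bool" where
  "LDI_step D p n pref r a j i b \<longleftrightarrow>
     (let S = unc_set D p n a j (r j) in
       is_alt D p b \<and> differs_only_on p i b (a j) \<and>
       S_dominates D p (pref j) S b (a j) \<and>
       \<not> (\<exists>b'. is_alt D p b' \<and> differs_only_on p i b' (a j) \<and> S_dominates D p (pref j) S b' b))"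

definition LDI_move :: "(nat \<Rightarrow> nat set) \<Rightarrow> nat \<Rightarrow> nat \<Rightarrow> (nat \<Rightarrow> alt \<Rightarrow> alt \<Rightarrow> bool)
     \<Rightarrow> (nat \<Rightarrow> nat \<Rightarrow> nat) \<Rightarrow> profile \<Rightarrow> profile \<Rightarrow> bool" where
  "LDI_move D p n pref r a a' \<longleftrightarrow>
     (\<exists>j<n. \<exists>i<p. \<exists>b. LDI_step D p n pref r a j i b \<and> a' = a(j := b))"

definition bin :: "nat \<Rightarrow> nat set" where "bin i = {0, 1}"

definition ranking :: "nat \<Rightarrow> alt list" where
  "ranking j =
    (if j < 3 then [[0,1],[1,1],[1,0],[0,0]]
     else if j < 8 then [[0,0],[0,1],[1,1],[1,0]]
     else if j < 12 then [[1,0],[1,1],[0,0],[0,1]]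
     else [[1,1],[1,0],[0,1],[0,0]])"

definition pref13 :: "nat \<Rightarrow> alt \<Rightarrow> alt \<Rightarrow> bool" where
  "pref13 j = rank_pref (ranking j)"

definition r12 :: "nat \<Rightarrow> nat \<Rightarrow> nat" where
  "r12 j i = (if i = 0 then 1 else 2)"

definition truthful :: "profile" where
  "truthful j = hd (ranking j)"

end

theory Submission
  imports Defs
begin

definition pl :: "nat \<Rightarrow> nat \<Rightarrow> nat" where "pl x y = (if x < y then 1 else 0)"
definition bv :: "alt \<Rightarrow> nat \<Rightarrow> nat \<Rightarrow> nat" where
  "bv b i c = (if i < length b \<and> c = b ! i then 1 else 0)"
definition outc :: "nat \<Rightarrow> nat \<Rightarrow> nat \<Rightarrow> nat \<Rightarrow> alt \<Rightarrow> alt" where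
  "outc x00 x01 x10 x11 b = [pl (x00 + bv b 0 0) (x01 + bv b 0 1), pl (x10 + bv b 1 0) (x11 + bv b 1 1)]"

lemma least_bin: "(LEAST c. c \<in> {0,1::nat} \<and> (\<forall>c'\<in>{0,1}. w c' \<le> (w c :: nat))) = pl (w 0) (w 1)"
proof (cases "w 0 < w 1")
  case True
  show ?thesis using True unfolding pl_def
    by (intro Least_equality) auto
next
  case False
  show ?thesis using False unfolding pl_def
    by (intro Least_equality) auto
qed

lemma plur: "plurality bin 2 w = [pl (w 0 0) (w 0 1), pl (w 1 0) (w 1 1)]"
  unfolding plurality_def bin_def least_bin by (simp add: numeral_2_eq_2)

lemma plur_add: "plurality bin 2 (add_vote v b) = outc (v 0 0) (v 0 1) (v 1 0) (v 1 1) b"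
  unfolding plur outc_def add_vote_def bv_def by simp

definition rng :: "nat \<Rightarrow> nat \<Rightarrow> nat list" where "rng s r = [s - r..<s + r + 1]"
definition sm :: "nat \<Rightarrow> profile \<Rightarrow> nat \<Rightarrow> nat \<Rightarrow> nat \<Rightarrow> nat" where
  "sm n a j i c = length (filter (\<lambda>k. k \<noteq> j \<and> a k ! i = c) [0..<n])"

lemma sm_eq: "score_minus n a j i c = sm n a j i c"
proof -
  have "{k. k < n \<and> k \<noteq> j \<and> a k ! i = c} = set (filter (\<lambda>k. k \<noteq> j \<and> a k ! i = c) [0..<n])"
    by auto
  then show ?thesis unfolding score_minus_def sm_def
    by (metis distinct_card distinct_filter distinct_upt)
qed

definition sbeats :: "nat \<Rightarrow> profile \<Rightarrow> nat \<Rightarrow> (nat \<Rightarrow> nat) \<Rightarrow> (alt \<Rightarrow> alt \<Rightarrow> bool) \<Rightarrow> alt \<Rightarrow> alt \<Rightarrow> bool" where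
  "sbeats n a j r P b c = (\<exists>x00\<in>set (rng (sm n a j 0 0) (r 0)). \<exists>x01\<in>set (rng (sm n a j 0 1) (r 0)).
      \<exists>x10\<in>set (rng (sm n a j 1 0) (r 1)). \<exists>x11\<in>set (rng (sm n a j 1 1) (r 1)).
      P (outc x00 x01 x10 x11 b) (outc x00 x01 x10 x11 c))"

lemma rng_iff: "x \<in> set (rng s r) \<longleftrightarrow> \<bar>int x - int s\<bar> \<le> int r"
  unfolding rng_def by auto

lemma sbeats_eq: "S_beats bin 2 P (unc_set bin 2 n a j r) b c = sbeats n a j r P b c"
proof
  assume "S_beats bin 2 P (unc_set bin 2 n a j r) b c"
  then obtain v where v: "v \<in> unc_set bin 2 n a j r"
    and P: "P (outc (v 0 0) (v 0 1) (v 1 0) (v 1 1) b) (outc (v 0 0) (v 0 1) (v 1 0) (v 1 1) c)"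
    unfolding S_beats_def plur_add by blast
  from v have "\<forall>i<2. \<forall>c\<in>{0,1}. \<bar>int (v i c) - int (sm n a j i c)\<bar> \<le> int (r i)"
    unfolding unc_set_def bin_def sm_eq by blast
  then have "\<bar>int (v 0 0) - int (sm n a j 0 0)\<bar> \<le> int (r 0)" "\<bar>int (v 0 1) - int (sm n a j 0 1)\<bar> \<le> int (r 0)"
    "\<bar>int (v 1 0) - int (sm n a j 1 0)\<bar> \<le> int (r 1)" "\<bar>int (v 1 1) - int (sm n a j 1 1)\<bar> \<le> int (r 1)"
    by auto
  then show "sbeats n a j r P b c" unfolding sbeats_def Bex_def rng_iff using P
    by blast
next
  assume "sbeats n a j r P b c"
  then obtain x00 x01 x10 x11 where
    h: "\<bar>int x00 - int (sm n a j 0 0)\<bar> \<le> int (r 0)" "\<bar>int x01 - int (sm n a j 0 1)\<bar> \<le> int (r 0)"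
       "\<bar>int x10 - int (sm n a j 1 0)\<bar> \<le> int (r 1)" "\<bar>int x11 - int (sm n a j 1 1)\<bar> \<le> int (r 1)"
    and P: "P (outc x00 x01 x10 x11 b) (outc x00 x01 x10 x11 c)"
    unfolding sbeats_def Bex_def rng_iff by blast
  define v :: "nat \<Rightarrow> nat \<Rightarrow> nat" where "v = (\<lambda>i cc. if i = 0 then (if cc = 0 then x00 else if cc = 1 then x01 else 0)
       else if i = 1 then (if cc = 0 then x10 else if cc = 1 then x11 else 0) else (0::nat))"
  have "v \<in> unc_set bin 2 n a j r"
    unfolding unc_set_def bin_def sm_eq using h
    by (auto simp: v_def less_2_cases_iff)
  moreover have "v 0 0 = x00" "v 0 1 = x01" "v 1 0 = x10" "v 1 1 = x11" by (auto simp: v_def)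
  ultimately show "S_beats bin 2 P (unc_set bin 2 n a j r) b c"
    unfolding S_beats_def plur_add using P by metis
qed

definition rp :: "alt list \<Rightarrow> alt \<Rightarrow> alt \<Rightarrow> bool" where
  "rp L x y = (\<exists>k\<in>set [0..<length L]. \<exists>l\<in>set [0..<length L]. k < l \<and> L ! k = x \<and> L ! l = y)"

lemma rp_eq: "rank_pref L = rp L"
  unfolding rank_pref_def rp_def by (intro ext iffI) (fastforce, force)

definition alts4 :: "alt list" where "alts4 = [[0,0],[0,1],[1,0],[1,1]]"

lemma is_alt_eq: "is_alt bin 2 b \<longleftrightarrow> b \<in> set alts4"
proof
  assume "is_alt bin 2 b"
  then have "length b = 2" "b!0 \<in> {0,1}" "b!1 \<in> {0,1}" unfolding is_alt_def bin_def by auto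
  then show "b \<in> set alts4" unfolding alts4_def
    by (cases b rule: list.exhaust; cases "tl b" rule: list.exhaust; auto)
next
  assume "b \<in> set alts4" then show "is_alt bin 2 b"
    unfolding alts4_def is_alt_def bin_def by (auto simp: less_2_cases_iff)
qed

definition dif :: "nat \<Rightarrow> alt \<Rightarrow> alt \<Rightarrow> bool" where
  "dif i b a = ((i \<noteq> 0 \<longrightarrow> b!0 = a!0) \<and> (i \<noteq> 1 \<longrightarrow> b!1 = a!1))"

lemma dif_eq: "differs_only_on 2 i b a = dif i b a"
  unfolding differs_only_on_def dif_def by (auto simp: less_2_cases_iff)

definition ldi_exec :: "profile \<Rightarrow> nat \<Rightarrow> nat \<Rightarrow> alt \<Rightarrow> bool" where
  "ldi_exec a j i b = (let sb = (\<lambda>x y. sbeats 13 a j (r12 j) (rp (ranking j)) x y);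
     dom = (\<lambda>x y. sb x y \<and> \<not> sb y x) in
     b \<in> set alts4 \<and> dif i b (a j) \<and> dom b (a j) \<and>
     \<not> (\<exists>b'\<in>set alts4. dif i b' (a j) \<and> dom b' b))"

lemma ldi_eq: "LDI_step bin 2 13 pref13 r12 a j i b = ldi_exec a j i b"
  unfolding LDI_step_def ldi_exec_def S_dominates_def pref13_def rp_eq sbeats_eq is_alt_eq dif_eq Let_def
  by blast

definition prof :: "alt list \<Rightarrow> profile" where
  "prof L = (\<lambda>k. if k < 13 then L ! k else hd (ranking k))"

definition cycl :: "alt list list" where
  "cycl = [[[0,1],[0,1],[0,1],[0,0],[0,0],[0,0],[0,0],[0,0],[1,0],[1,0],[1,0],[1,0],[1,1]], [[1,1],[0,1],[0,1],[0,0],[0,0],[0,0],[0,0],[0,0],[1,0],[1,0],[1,0],[1,0],[1,1]], [[1,1],[1,1],[0,1],[0,0],[0,0],[0,0],[0,0],[0,0],[1,0],[1,0],[1,0],[1,0],[1,1]], [[1,1],[1,1],[1,1],[0,0],[0,0],[0,0],[0,0],[0,0],[1,0],[1,0],[1,0],[1,0],[1,1]], [[1,1],[1,1],[1,1],[0,1],[0,0],[0,0],[0,0],[0,0],[1,0],[1,0],[1,0],[1,0],[1,1]], [[1,1],[1,1],[1,1],[0,1],[0,1],[0,0],[0,0],[0,0],[1,0],[1,0],[1,0],[1,0],[1,1]], [[1,1],[1,1],[1,1],[0,1],[0,1],[0,1],[0,0],[0,0],[1,0],[1,0],[1,0],[1,0],[1,1]], [[1,1],[1,1],[1,1],[0,1],[0,1],[0,1],[0,1],[0,0],[1,0],[1,0],[1,0],[1,0],[1,1]],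 [[1,1],[1,1],[1,1],[0,1],[0,1],[0,1],[0,1],[0,1],[1,0],[1,0],[1,0],[1,0],[1,1]], [[0,1],[1,1],[1,1],[0,1],[0,1],[0,1],[0,1],[0,1],[1,0],[1,0],[1,0],[1,0],[1,1]], [[0,1],[0,1],[1,1],[0,1],[0,1],[0,1],[0,1],[0,1],[1,0],[1,0],[1,0],[1,0],[1,1]], [[0,1],[0,1],[0,1],[0,1],[0,1],[0,1],[0,1],[0,1],[1,0],[1,0],[1,0],[1,0],[1,1]], [[0,1],[0,1],[0,1],[0,0],[0,1],[0,1],[0,1],[0,1],[1,0],[1,0],[1,0],[1,0],[1,1]], [[0,1],[0,1],[0,1],[0,0],[0,0],[0,1],[0,1],[0,1],[1,0],[1,0],[1,0],[1,0],[1,1]], [[0,1],[0,1],[0,1],[0,0],[0,0],[0,0],[0,1],[0,1],[1,0],[1,0],[1,0],[1,0],[1,1]], [[0,1],[0,1],[0,1],[0,0],[0,0],[0,0],[0,0],[0,1],[1,0],[1,0],[1,0],[1,0],[1,1]]]"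

definition mvs :: "(nat \<times> nat \<times> alt) list" where
  "mvs = [(0,0,[1,1]), (1,0,[1,1]), (2,0,[1,1]), (3,1,[0,1]), (4,1,[0,1]), (5,1,[0,1]), (6,1,[0,1]), (7,1,[0,1]), (0,0,[0,1]), (1,0,[0,1]), (2,0,[0,1]), (3,1,[0,0]), (4,1,[0,0]), (5,1,[0,0]), (6,1,[0,0]), (7,1,[0,0])]"

definition check :: bool where
  "check = ((\<forall>k\<in>set [0..<16]. case mvs ! k of (j, i, b) \<Rightarrow>
       j < 13 \<and> i < 2 \<and> length (cycl ! k) = 13 \<and> ldi_exec (prof (cycl ! k)) j i b \<and>
       cycl ! ((k + 1) mod 16) = (cycl ! k)[j := b]) \<and> cycl ! 0 = map (\<lambda>k. hd (ranking k)) [0..<13])"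

lemma check_true: check
  by code_simp

lemma prof_upd: "j < 13 \<Longrightarrow> length L = 13 \<Longrightarrow> prof (L[j := b]) = (prof L)(j := b)"
  by (auto simp: prof_def intro!: ext)

theorem proposition2:
  shows "\<exists>a :: nat \<Rightarrow> profile. a 0 = truthful \<and>
           (\<forall>t. LDI_move bin 2 13 pref13 r12 (a t) (a (Suc t)))"
proof -
  have C: "\<forall>k\<in>set [0..<16]. case mvs ! k of (j, i, b) \<Rightarrow>
       j < 13 \<and> i < 2 \<and> length (cycl ! k) = 13 \<and> ldi_exec (prof (cycl ! k)) j i b \<and>
       cycl ! ((k + 1) mod 16) = (cycl ! k)[j := b]"
    using check_true[unfolded check_def] by (rule conjunct1)
  have C0: "cycl ! 0 = map (\<lambda>k. hd (ranking k)) [0..<13]"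
    using check_true[unfolded check_def] by (rule conjunct2)
  define a where "a = (\<lambda>t. prof (cycl ! (t mod 16)))"
  have "a 0 = truthful"
    unfolding a_def prof_def truthful_def by (auto intro!: ext simp: C0)
  moreover have "LDI_move bin 2 13 pref13 r12 (a t) (a (Suc t))" for t
  proof -
    define k where "k = t mod 16"
    have k: "k \<in> set [0..<16]" unfolding k_def by simp
    obtain j i b where m: "mvs ! k = (j, i, b)" by (cases "mvs ! k") auto
    have h: "j < 13" "i < 2" "length (cycl ! k) = 13" "ldi_exec (prof (cycl ! k)) j i b"
       "cycl ! ((k + 1) mod 16) = (cycl ! k)[j := b]"
      using bspec[OF C k] m by auto
    have s: "Suc t mod 16 = (k + 1) mod 16" unfolding k_def by (simp add: mod_Suc)
    have "a (Suc t) = (a t)(j := b)"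
      unfolding a_def s k_def[symmetric] h(5) using prof_upd[OF h(1) h(3)] by simp
    then show ?thesis unfolding LDI_move_def ldi_eq using h unfolding a_def k_def by blast
  qed
  ultimately show ?thesis by blast
qed

end
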